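(* Let $X$ be a connected, finite, simple $4$-valent graph equipped with an orientation at each vertex. Then for every integer $k\geq2$, the Laplacian of $\mathrm{GC}_{2k,0}(X)$ has eigenvalue $4$ with multiplicity at least $\lceil (k-1)/2\rceil$.
   Context: The Laplacian of a graph $Y$ acts on $f\in\mathbb{C}^{V(Y)}$ by $(\Delta_Y f)(p)=\deg(p)f(p)-\sum_{q\sim p}f(q)$. An orientation at each vertex is a cyclic ordering of the four edges at each vertex. Goldberg–Coxeter construction $\mathrm{GC}_{m,0}(X)$ for $m\geq1$: in the square lattice $\mathbb{Z}[i]\subset\mathbb{C}$ let $S$ be the square with vertices $0,m,(1+i)m,im$. For each $p\in V(X)$ take a copy $\overline{\square}(p)$ of the graph whose vertices are the barycenters of the $m^2$ unit squares in $S$, adjacent when the squares share an edge (an $m\times m$ grid); the four sides of $S$ are matched with the four edges at $p$ so that the cyclic order at $p$ agrees with the counterclockwise order of the sides. For each edge $e=pq$, place $\overline{\square}(p)$ on $S$ with $e$ corresponding to the side from $m$ to $(1+i)m$ and $\overline{\square}(q)$ (preserving orientation) on the adjacent square with vertices $m,2m,(2+i)m,(1+i)m$ with $e$ corresponding to the side from $(1+i)m$ to $m$, and identify all overlapping vertices and edges; the result is the $4$-valent graph $\mathrm{GC}_{m,0}(X)$. *)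

theory Defs
  imports Complex_Main
begin

definition simple_graph :: "'a set \<Rightarrow> ('a \<Rightarrow> 'a \<Rightarrow> bool) \<Rightarrow> bool" where
  "simple_graph V E \<longleftrightarrow> (\<forall>p q. E p q \<longrightarrow> p \<in> V \<and> q \<in> V \<and> p \<noteq> q \<and> E q p)"

definition nbhd :: "'a set \<Rightarrow> ('a \<Rightarrow> 'a \<Rightarrow> bool) \<Rightarrow> 'a \<Rightarrow> 'a set" where
  "nbhd V E p = {q \<in> V. E p q}"

definition graph_connected :: "'a set \<Rightarrow> ('a \<Rightarrow> 'a \<Rightarrow> bool) \<Rightarrow> bool" where
  "graph_connected V E \<longleftrightarrow> V \<noteq> {} \<and> (\<forall>p\<in>V. \<forall>q\<in>V. E\<^sup>*\<^sup>* p q)"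

text \<open>An orientation of a 4-valent graph: at each vertex p, the cyclic ordering
  rot p 0, rot p 1, rot p 2, rot p 3 (indices mod 4) of the four neighbours.\<close>
definition orientation4 :: "'a set \<Rightarrow> ('a \<Rightarrow> 'a \<Rightarrow> bool) \<Rightarrow> ('a \<Rightarrow> nat \<Rightarrow> 'a) \<Rightarrow> bool" where
  "orientation4 V E rot \<longleftrightarrow> (\<forall>p\<in>V. bij_betw (rot p) {..<4} (nbhd V E p))"

definition laplacian :: "'v set \<Rightarrow> ('v \<Rightarrow> 'v \<Rightarrow> bool) \<Rightarrow> ('v \<Rightarrow> complex) \<Rightarrow> 'v \<Rightarrow> complex" where
  "laplacian V E f p = of_nat (card (nbhd V E p)) * f p - (\<Sum>q\<in>nbhd V E p. f q)"

definition laplacian_eigenvalue_mult_ge ::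
  "'v set \<Rightarrow> ('v \<Rightarrow> 'v \<Rightarrow> bool) \<Rightarrow> complex \<Rightarrow> nat \<Rightarrow> bool" where
  "laplacian_eigenvalue_mult_ge V E \<mu> n \<longleftrightarrow>
     (\<exists>F :: nat \<Rightarrow> 'v \<Rightarrow> complex.
        (\<forall>i<n. \<forall>p\<in>V. laplacian V E (F i) p = \<mu> * F i p) \<and>
        (\<forall>c :: nat \<Rightarrow> complex. (\<forall>p\<in>V. (\<Sum>i<n. c i * F i p) = 0) \<longrightarrow> (\<forall>i<n. c i = 0)))"

text \<open>Vertices of GC_{m,0}(X): (p,x,y) with p a vertex of X and (x,y) the unit square
  [x,x+1]\<times>[y,y+1] of S=[0,m]^2 (identified with its barycenter).\<close>
definition GC_verts :: "'a set \<Rightarrow> nat \<Rightarrow> ('a \<times> nat \<times> nat) set" where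
  "GC_verts V m = V \<times> ({..<m} \<times> {..<m})"

text \<open>Sides of S in counterclockwise order: 0 = bottom (0 to m), 1 = right (m to (1+i)m),
  2 = top ((1+i)m to im), 3 = left (im to 0).  bpos m s t is the t-th unit square
  (t < m) adjacent to side s, counted along the counterclockwise direction of that side.\<close>
definition bpos :: "nat \<Rightarrow> nat \<Rightarrow> nat \<Rightarrow> nat \<times> nat" where
  "bpos m s t = (if s = 0 then (t, 0)
                 else if s = 1 then (m - 1, t)
                 else if s = 2 then (m - 1 - t, m - 1)
                 else (0, m - 1 - t))"

definition grid_adj :: "nat \<times> nat \<Rightarrow> nat \<times> nat \<Rightarrow> bool" where
  "grid_adj a b \<longleftrightarrow> (fst a = fst b \<and> (snd b = snd a + 1 \<or> snd a = snd b + 1)) \<or>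
                    (snd a = snd b \<and> (fst b = fst a + 1 \<or> fst a = fst b + 1))"

text \<open>Side s of the square of p is matched with the edge from p to rot p s.  Gluing along
  the edge pq (side i at p, side j at q) places the squares so that the t-th boundary
  square of p along side i meets the (m-1-t)-th boundary square of q along side j
  (the two sides carry opposite counterclockwise directions).\<close>
definition GC_adj :: "'a set \<Rightarrow> ('a \<Rightarrow> nat \<Rightarrow> 'a) \<Rightarrow> nat \<Rightarrow>
    ('a \<times> nat \<times> nat) \<Rightarrow> ('a \<times> nat \<times> nat) \<Rightarrow> bool" where
  "GC_adj V rot m u v \<longleftrightarrow> u \<in> GC_verts V m \<and> v \<in> GC_verts V m \<and>
     ((fst u = fst v \<and> grid_adj (snd u) (snd v)) \<or>
      (\<exists>i<4. \<exists>j<4. \<exists>t<m. rot (fst u) i = fst v \<and> rot (fst v) j = fst u \<and>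
          snd u = bpos m i t \<and> snd v = bpos m j (m - 1 - t)))"

end

theory Submission
  imports Defs
begin


definition sgn1 :: "int \<Rightarrow> complex" where "sgn1 x = (if even x then 1 else - 1)"
definition Ac :: "int \<Rightarrow> int \<Rightarrow> int \<Rightarrow> complex" where
 "Ac m c s = (if s mod m = m - 2 - c then 1 else 0) - (if s mod m = c then 1 else 0)"
definition Gf :: "(int \<Rightarrow> complex) \<Rightarrow> int \<Rightarrow> int \<Rightarrow> complex" where
 "Gf A x y = sgn1 x * (A (x + y) + A (x - y - 1))"

lemma sgn1_p1: "sgn1 (x+1) = - sgn1 x" by (simp add: sgn1_def)
lemma sgn1_m1: "sgn1 (x-1) = - sgn1 x" by (simp add: sgn1_def)

lemma Gf_harm: "Gf A (x+1) y + Gf A (x-1) y + Gf A x (y+1) + Gf A x (y-1) = 0"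
proof -
  have a: "x + 1 + y = x + y + 1" "x + 1 - y - 1 = x - y - 1 + 1" "x - 1 + y = x + y - 1"
     "x - 1 - y - 1 = x - y - 1 - 1" "x + (y+1) = x + y + 1" "x - (y+1) - 1 = x - y - 1 - 1"
     "x + (y - 1) = x + y - 1" "x - (y - 1) - 1 = x - y - 1 + 1" by simp_all
  show ?thesis unfolding Gf_def sgn1_p1 sgn1_m1 a by (simp add: algebra_simps)
qed

lemma Gf_rot:
  assumes "even m" and per: "\<forall>s. A (s + m) = A s" and anti: "\<forall>s. A (-2 - s) = - A s"
    and par: "\<forall>s. odd s \<longrightarrow> A s = 0"
  shows "Gf A (m - 1 - y) x = Gf A x y"
proof -
  have e1: "A (m - 1 - y + x) = A (x - y - 1)"
    using per[rule_format, of "x - y - 1"] by (simp add: algebra_simps)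
  have e2: "A (m - 1 - y - x - 1) = - A (x + y)"
    using per[rule_format, of "-2 - (x+y)"] anti[rule_format, of "x+y"] by (simp add: algebra_simps)
  have s: "sgn1 (m - 1 - y) = - sgn1 y" using assms(1) by (simp add: sgn1_def)
  show ?thesis
  proof (cases "even (x+y)")
    case True
    then have "odd (x - y - 1)" by presburger
    then have "A (x - y - 1) = 0" using par by blast
    moreover have "sgn1 y = sgn1 x" using True unfolding sgn1_def by (cases "even x") auto
    ultimately show ?thesis unfolding Gf_def s e1 e2 by simp
  next
    case False
    then have "A (x + y) = 0" using par by blast
    moreover have "sgn1 y = - sgn1 x" using False unfolding sgn1_def by (cases "even x") auto
    ultimately show ?thesis unfolding Gf_def s e1 e2 by simp
  qed
qed

lemma Gf_refl:
  assumes "even m" and per: "\<forall>s. A (s + m) = A s" and anti: "\<forall>s. A (-2 - s) = - A s"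
  shows "Gf A t (-1) = Gf A (m - 1 - t) 0"
proof -
  have e1: "A (m - 1 - t) = - A (t - 1)"
    using per[rule_format, of "-1 - t"] anti[rule_format, of "t - 1"] by (simp add: algebra_simps)
  have e2: "A (m - 1 - t - 0 - 1) = - A t"
    using per[rule_format, of "-2 - t"] anti[rule_format, of "t"] by (simp add: algebra_simps)
  have s: "sgn1 (m - 1 - t) = - sgn1 t" using assms(1) by (simp add: sgn1_def)
  show ?thesis unfolding Gf_def s e2 using e1 by (simp add: algebra_simps)
qed

lemma Ac_props:
  assumes "m > 0" "even m" "even c" "0 \<le> c" "c \<le> m - 2"
  shows "\<forall>s. Ac m c (s + m) = Ac m c s" "\<forall>s. Ac m c (-2 - s) = - Ac m c s"
    "\<forall>s. odd s \<longrightarrow> Ac m c s = 0"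
proof -
  show "\<forall>s. Ac m c (s + m) = Ac m c s" by (simp add: Ac_def)
  show "\<forall>s. Ac m c (-2 - s) = - Ac m c s"
  proof
    fix s :: int
    define r where "r = s mod m"
    have r: "0 \<le> r" "r < m" using assms(1) by (simp_all add: r_def)
    have h: "m - 2 - r = (-2 - r) + m" by simp
    have h2: "(m - 2 - r) mod m = (-2 - r) mod m" unfolding h by (rule mod_add_self2)
    have "(-2 - s) mod m = (-2 - r) mod m" unfolding r_def by (simp add: mod_diff_right_eq)
    also have "\<dots> = (m - 2 - r) mod m" using h2 by simp
    also have "\<dots> = (if r = m - 1 then m - 1 else m - 2 - r)"
    proof (cases "r = m - 1")
      case True
      then have "m - 2 - r = -1" by simp
      then show ?thesis using True assms(1) by (simp add: zmod_minus1)
    next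
      case False
      then show ?thesis using r by simp
    qed
    finally have k: "(-2 - s) mod m = (if r = m - 1 then m - 1 else m - 2 - r)" .
    have c1: "((-2 - s) mod m = m - 2 - c) = (r = c)" unfolding k using assms(4,5) r by (cases "r = m - 1") simp_all
    have c2: "((-2 - s) mod m = c) = (r = m - 2 - c)" unfolding k using assms(4,5) r by (cases "r = m - 1") auto
    show "Ac m c (-2 - s) = - Ac m c s"
      unfolding Ac_def c1 c2 r_def[symmetric] by simp
  qed
  show "\<forall>s. odd s \<longrightarrow> Ac m c s = 0"
  proof (intro allI impI)
    fix s :: int assume "odd s"
    then have "odd (s mod m)" using assms(2) mod_mod_cancel[of 2 m s]
      by (metis dvd_mod_iff)
    moreover have "even (m - 2 - c)" using assms(2,3) by simp
    ultimately show "Ac m c s = 0" unfolding Ac_def using assms(3) by (metis diff_self)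
  qed
qed
definition crossn :: "('a \<Rightarrow> nat \<Rightarrow> 'a) \<Rightarrow> nat \<Rightarrow> 'a \<Rightarrow> nat \<Rightarrow> nat \<Rightarrow> 'a \<times> nat \<times> nat" where
 "crossn rot m p i t = (rot p i, bpos m (SOME j. j < 4 \<and> rot (rot p i) j = p) (m - 1 - t))"

definition nbr :: "('a \<Rightarrow> nat \<Rightarrow> 'a) \<Rightarrow> nat \<Rightarrow> 'a \<Rightarrow> nat \<Rightarrow> nat \<Rightarrow> nat \<Rightarrow> 'a \<times> nat \<times> nat" where
 "nbr rot m p x y d =
   (if d = 0 then (if x + 1 < m then (p, x + 1, y) else crossn rot m p 1 y)
    else if d = 1 then (if y + 1 < m then (p, x, y + 1) else crossn rot m p 2 (m - 1 - x))
    else if d = 2 then (if 0 < x then (p, x - 1, y) else crossn rot m p 3 (m - 1 - y))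
    else (if 0 < y then (p, x, y - 1) else crossn rot m p 0 x))"

lemma orient_facts:
  assumes sg: "simple_graph V E" and ori: "orientation4 V E rot" and p: "p \<in> V" and i: "i < 4"
  shows "rot p i \<in> V" "E p (rot p i)" "rot p i \<noteq> p" "\<exists>j<4. rot (rot p i) j = p"
proof -
  have b: "bij_betw (rot p) {..<4} (nbhd V E p)" using ori p unfolding orientation4_def by blast
  then have "rot p i \<in> nbhd V E p" using i by (auto simp: bij_betw_def)
  then show r: "rot p i \<in> V" and e: "E p (rot p i)" by (auto simp: nbhd_def)
  show "rot p i \<noteq> p" using e sg unfolding simple_graph_def by blast
  have "E (rot p i) p" using e sg unfolding simple_graph_def by blast
  then have "p \<in> nbhd V E (rot p i)" using p by (simp add: nbhd_def)
  moreover have "bij_betw (rot (rot p i)) {..<4} (nbhd V E (rot p i))" using ori r unfolding orientation4_def by blast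
  ultimately show "\<exists>j<4. rot (rot p i) j = p" unfolding bij_betw_def by (metis imageE lessThan_iff)
qed

lemma orient_inj:
  assumes ori: "orientation4 V E rot" and p: "p \<in> V" and "i < 4" "j < 4" "rot p i = rot p j"
  shows "i = j"
proof -
  have b: "bij_betw (rot p) {..<4} (nbhd V E p)" using ori p unfolding orientation4_def by blast
  then show ?thesis using assms(3-5) unfolding bij_betw_def inj_on_def by auto
qed

lemma back_facts:
  assumes sg: "simple_graph V E" and ori: "orientation4 V E rot" and p: "p \<in> V" and i: "i < 4"
  defines "j0 \<equiv> SOME j. j < 4 \<and> rot (rot p i) j = p"
  shows "j0 < 4" "rot (rot p i) j0 = p" "\<And>j. j < 4 \<Longrightarrow> rot (rot p i) j = p \<Longrightarrow> j = j0"
proof -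
  have ex: "\<exists>j. j < 4 \<and> rot (rot p i) j = p" using orient_facts(4)[OF sg ori p i] by blast
  show a: "j0 < 4" "rot (rot p i) j0 = p" using someI_ex[OF ex] unfolding j0_def by auto
  fix j assume "j < 4" "rot (rot p i) j = p"
  then show "j = j0" using orient_inj[OF ori orient_facts(1)[OF sg ori p i] \<open>j < 4\<close> a(1)] a(2) by simp
qed

lemma bpos_range: "t < m \<Longrightarrow> fst (bpos m i t) < m \<and> snd (bpos m i t) < m"
  by (auto simp: bpos_def)

lemma cross_adj:
  assumes sg: "simple_graph V E" and ori: "orientation4 V E rot" and p: "p \<in> V" and i: "i < 4"
    and t: "t < m"
  shows "crossn rot m p i t \<in> nbhd (GC_verts V m) (GC_adj V rot m) (p, bpos m i t)"
proof -
  define j0 where "j0 = (SOME j. j < 4 \<and> rot (rot p i) j = p)"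
  have j0: "j0 < 4" "rot (rot p i) j0 = p" unfolding j0_def
    by (rule back_facts(1)[OF sg ori p i], rule back_facts(2)[OF sg ori p i])
  have c: "crossn rot m p i t = (rot p i, bpos m j0 (m - 1 - t))" by (simp add: crossn_def j0_def)
  have v1: "(p, bpos m i t) \<in> GC_verts V m" using p bpos_range[OF t, of i]
    by (cases "bpos m i t") (simp add: GC_verts_def)
  have "m - 1 - t < m" using t by simp
  then have v2': "(rot p i, bpos m j0 (m - 1 - t)) \<in> GC_verts V m"
    using orient_facts(1)[OF sg ori p i] bpos_range[of "m - 1 - t" m j0]
    by (cases "bpos m j0 (m - 1 - t)") (simp add: GC_verts_def)
  then have v2: "crossn rot m p i t \<in> GC_verts V m" unfolding c .
  have ex: "\<exists>i'<4. \<exists>j<4. \<exists>t'<m. rot p i' = rot p i \<and> rot (rot p i) j = p \<and>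
      bpos m i t = bpos m i' t' \<and> bpos m j0 (m - 1 - t) = bpos m j (m - 1 - t')"
    using i j0 t by blast
  have "GC_adj V rot m (p, bpos m i t) (crossn rot m p i t)"
    unfolding GC_adj_def c fst_conv snd_conv using v1 v2' ex by blast
  then show ?thesis using v2 by (simp add: nbhd_def)
qed

lemma grid_in:
  assumes "p \<in> V" "x < m" "y < m" "x' < m" "y' < m" "grid_adj (x,y) (x',y')"
  shows "(p,x',y') \<in> nbhd (GC_verts V m) (GC_adj V rot m) (p,x,y)"
  using assms by (auto simp: nbhd_def GC_adj_def GC_verts_def)

lemma nbr_in:
  assumes sg: "simple_graph V E" and ori: "orientation4 V E rot" and p: "p \<in> V"
    and x: "x < m" and y: "y < m" and d: "d < 4"
  shows "nbr rot m p x y d \<in> nbhd (GC_verts V m) (GC_adj V rot m) (p,x,y)"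
proof -
  have "d = 0 \<or> d = 1 \<or> d = 2 \<or> d = 3" using d by auto
  then show ?thesis
  proof (elim disjE)
    assume d0: "d = 0"
    show ?thesis
    proof (cases "x + 1 < m")
      case True then show ?thesis using d0 grid_in[OF p x y True y] by (simp add: nbr_def grid_adj_def)
    next
      case False
      then have "bpos m 1 y = (x, y)" using x by (simp add: bpos_def)
      then show ?thesis using d0 False cross_adj[OF sg ori p _ y, of 1] by (simp add: nbr_def)
    qed
  next
    assume d0: "d = 1"
    show ?thesis
    proof (cases "y + 1 < m")
      case True then show ?thesis using d0 grid_in[OF p x y x True] by (simp add: nbr_def grid_adj_def)
    next
      case False
      then have "bpos m 2 (m - 1 - x) = (x, y)" using x y by (simp add: bpos_def)
      moreover have "crossn rot m p 2 (m - 1 - x) \<in> nbhd (GC_verts V m) (GC_adj V rot m) (p, bpos m 2 (m - 1 - x))"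
        by (rule cross_adj[OF sg ori p]) (use x in auto)
      ultimately show ?thesis using d0 False by (simp add: nbr_def)
    qed
  next
    assume d0: "d = 2"
    show ?thesis
    proof (cases "0 < x")
      case True
      have "x - 1 < m" using x by simp
      then show ?thesis using d0 True grid_in[OF p x y _ y, of "x - 1"] by (simp add: nbr_def grid_adj_def)
    next
      case False
      then have "bpos m 3 (m - 1 - y) = (x, y)" using x y by (simp add: bpos_def)
      moreover have "crossn rot m p 3 (m - 1 - y) \<in> nbhd (GC_verts V m) (GC_adj V rot m) (p, bpos m 3 (m - 1 - y))"
        by (rule cross_adj[OF sg ori p]) (use y in auto)
      ultimately show ?thesis using d0 False by (simp add: nbr_def)
    qed
  next
    assume d0: "d = 3"
    show ?thesis
    proof (cases "0 < y")
      case True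
      have "y - 1 < m" using y by simp
      then show ?thesis using d0 True grid_in[OF p x y x, of "y - 1"] by (simp add: nbr_def grid_adj_def)
    next
      case False
      then have "bpos m 0 x = (x, y)" using x y by (simp add: bpos_def)
      then show ?thesis using d0 False cross_adj[OF sg ori p _ x, of 0] by (simp add: nbr_def)
    qed
  qed
qed

lemma nbr_inj:
  assumes sg: "simple_graph V E" and ori: "orientation4 V E rot" and p: "p \<in> V"
    and x: "x < m" and y: "y < m"
  shows "inj_on (nbr rot m p x y) {..<4}"
proof -
  have n1: "\<And>i. i < 4 \<Longrightarrow> rot p i \<noteq> p" using orient_facts(3)[OF sg ori p] by blast
  have n2: "\<And>i j. i < 4 \<Longrightarrow> j < 4 \<Longrightarrow> rot p i = rot p j \<Longrightarrow> i = j" using orient_inj[OF ori p] by blast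
  have r0: "rot p 0 \<noteq> p" "rot p 1 \<noteq> p" "rot p 2 \<noteq> p" "rot p 3 \<noteq> p" using n1 by auto
  have r1: "rot p 0 \<noteq> rot p 1" "rot p 0 \<noteq> rot p 2" "rot p 0 \<noteq> rot p 3"
      "rot p 1 \<noteq> rot p 2" "rot p 1 \<noteq> rot p 3" "rot p 2 \<noteq> rot p 3"
    using n2[of 0 1] n2[of 0 2] n2[of 0 3] n2[of 1 2] n2[of 1 3] n2[of 2 3] by auto
  show ?thesis
  proof (rule inj_onI)
    fix d d' assume d: "d \<in> {..<4}" and d': "d' \<in> {..<4}" and eq: "nbr rot m p x y d = nbr rot m p x y d'"
    have "d = 0 \<or> d = 1 \<or> d = 2 \<or> d = 3" "d' = 0 \<or> d' = 1 \<or> d' = 2 \<or> d' = 3" using d d' by auto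
    then show "d = d'" using eq r0 r1 r0[symmetric] r1[symmetric]
      by (auto simp: nbr_def crossn_def split: if_splits)
  qed
qed

lemma nbr_cover:
  assumes sg: "simple_graph V E" and ori: "orientation4 V E rot" and p: "p \<in> V"
    and x: "x < m" and y: "y < m"
    and v: "v \<in> nbhd (GC_verts V m) (GC_adj V rot m) (p,x,y)"
  shows "\<exists>d<4. v = nbr rot m p x y d"
proof -
  obtain q x' y' where vq: "v = (q, x', y')" by (cases v) auto
  have vv: "x' < m" "y' < m" and adj: "GC_adj V rot m (p,x,y) (q,x',y')"
    using v unfolding vq nbhd_def GC_verts_def by auto
  from adj have "(p = q \<and> grid_adj (x,y) (x',y')) \<or>
      (\<exists>i<4. \<exists>j<4. \<exists>t<m. rot p i = q \<and> rot q j = p \<and> (x,y) = bpos m i t \<and> (x',y') = bpos m j (m - 1 - t))"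
    unfolding GC_adj_def by simp
  then show ?thesis
  proof (elim disjE conjE exE)
    assume pq: "p = q" and g: "grid_adj (x,y) (x',y')"
    from g have "(x = x' \<and> y' = y + 1) \<or> (x = x' \<and> y = y' + 1) \<or> (y = y' \<and> x' = x + 1) \<or> (y = y' \<and> x = x' + 1)"
      unfolding grid_adj_def by auto
    then show ?thesis
    proof (elim disjE conjE)
      assume "x = x'" "y' = y + 1" then show ?thesis using vv pq unfolding vq
        by (intro exI[of _ 1]) (simp add: nbr_def)
    next
      assume "x = x'" "y = y' + 1" then show ?thesis using vv pq unfolding vq
        by (intro exI[of _ 3]) (simp add: nbr_def)
    next
      assume "y = y'" "x' = x + 1" then show ?thesis using vv pq unfolding vq
        by (intro exI[of _ 0]) (simp add: nbr_def)
    next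
      assume "y = y'" "x = x' + 1" then show ?thesis using vv pq unfolding vq
        by (intro exI[of _ 2]) (simp add: nbr_def)
    qed
  next
    fix i j t assume i: "i < 4" and j: "j < 4" and t: "t < m" and q: "rot p i = q" and qj: "rot q j = p"
      and xy: "(x,y) = bpos m i t" and xy': "(x',y') = bpos m j (m - 1 - t)"
    have jj: "j = (SOME j. j < 4 \<and> rot (rot p i) j = p)"
      using back_facts(3)[OF sg ori p i j] qj q by simp
    have cr: "crossn rot m p i t = v" unfolding crossn_def vq using q jj xy' by simp
    have "i = 0 \<or> i = 1 \<or> i = 2 \<or> i = 3" using i by auto
    then show ?thesis
    proof (elim disjE)
      assume i0: "i = 0"
      then have "x = t" "y = 0" using xy by (auto simp: bpos_def)
      then show ?thesis using cr i0 by (intro exI[of _ 3]) (simp add: nbr_def)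
    next
      assume i0: "i = 1"
      then have "x = m - 1" "y = t" using xy by (auto simp: bpos_def)
      then show ?thesis using cr i0 t by (intro exI[of _ 0]) (simp add: nbr_def)
    next
      assume i0: "i = 2"
      then have "x = m - 1 - t" "y = m - 1" using xy by (auto simp: bpos_def)
      moreover have "m - 1 - (m - 1 - t) = t" using t by simp
      ultimately show ?thesis using cr i0 t by (intro exI[of _ 1]) (simp add: nbr_def)
    next
      assume i0: "i = 3"
      then have "x = 0" "y = m - 1 - t" using xy by (auto simp: bpos_def)
      moreover have "m - 1 - (m - 1 - t) = t" using t by simp
      ultimately show ?thesis using cr i0 t by (intro exI[of _ 2]) (simp add: nbr_def)
    qed
  qed
qed

definition fG :: "(int \<Rightarrow> int \<Rightarrow> complex) \<Rightarrow> 'a \<times> nat \<times> nat \<Rightarrow> complex" where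
  "fG G u = G (int (fst (snd u))) (int (snd (snd u)))"

lemma rot_derived:
  fixes M :: int and G :: "int \<Rightarrow> int \<Rightarrow> 'b"
  assumes rotG: "\<forall>x y. G (M - 1 - y) x = G x y"
  shows "G M y = G y (-1)" "G x M = G (M - 1 - x) (-1)" "G (-1) y = G (M - 1 - y) (-1)"
proof -
  show L1: "G M y = G y (-1)" for y using rotG[rule_format, where x=y and y="-1"] by (simp add: algebra_simps)
  show L2: "G x M = G (M - 1 - x) (-1)" for x
    using rotG[rule_format, where x=M and y="M - 1 - x"] L1[of "M - 1 - x"] by simp
  show "G (-1) y = G (M - 1 - y) (-1)" using rotG[rule_format, where x=y and y=M] L2[of y] by simp
qed

lemma bposG:
  assumes rotG: "\<forall>x y. G (int m - 1 - y) x = G x y" and j: "j < 4" and s: "s < m"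
  shows "G (int (fst (bpos m j s))) (int (snd (bpos m j s))) = G (int s) 0"
proof -
  have "j = 0 \<or> j = 1 \<or> j = 2 \<or> j = 3" using j by auto
  then show ?thesis
  proof (elim disjE)
    assume "j = 0" then show ?thesis by (simp add: bpos_def)
  next
    assume "j = 1" then show ?thesis using s rotG[rule_format, where x="int s" and y=0] by (simp add: bpos_def of_nat_diff)
  next
    assume "j = 2" then show ?thesis using s rotG[rule_format, where x="int m - 1" and y="int s"] rotG[rule_format, where x="int s" and y=0]
      by (simp add: bpos_def of_nat_diff algebra_simps)
  next
    assume "j = 3" then show ?thesis using s rotG[rule_format, where x="int m - 1 - int s" and y="int m - 1"]
       rotG[rule_format, where x="int m - 1" and y="int s"] rotG[rule_format, where x="int s" and y=0]
      by (simp add: bpos_def of_nat_diff algebra_simps)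
  qed
qed

lemma crossG:
  assumes sg: "simple_graph V E" and ori: "orientation4 V E rot" and p: "p \<in> V" and i: "i < 4"
    and t: "t < m"
    and rotG: "\<forall>x y. G (int m - 1 - y) x = G x y" and reflG: "\<forall>t. G t (-1) = G (int m - 1 - t) 0"
  shows "fG G (crossn rot m p i t) = G (int t) (-1)"
proof -
  define j0 where "j0 = (SOME j. j < 4 \<and> rot (rot p i) j = p)"
  have j0: "j0 < 4" unfolding j0_def by (rule back_facts(1)[OF sg ori p i])
  have "fG G (crossn rot m p i t) = G (int (m - 1 - t)) 0"
    unfolding fG_def crossn_def j0_def[symmetric] using bposG[OF rotG j0, of "m - 1 - t"] t by simp
  also have "\<dots> = G (int t) (-1)" using reflG[rule_format, of "int t"] t by (simp add: of_nat_diff algebra_simps)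
  finally show ?thesis .
qed

lemma nbr_sum:
  assumes sg: "simple_graph V E" and ori: "orientation4 V E rot" and p: "p \<in> V"
    and x: "x < m" and y: "y < m"
    and rotG: "\<forall>x y. G (int m - 1 - y) x = G x y" and reflG: "\<forall>t. G t (-1) = G (int m - 1 - t) 0"
  shows "(\<Sum>d<4. fG G (nbr rot m p x y d)) =
     G (int x + 1) (int y) + G (int x) (int y + 1) + G (int x - 1) (int y) + G (int x) (int y - 1)"
proof -
  note rd = rot_derived[OF rotG]
  have cG: "\<And>i t. i < 4 \<Longrightarrow> t < m \<Longrightarrow> fG G (crossn rot m p i t) = G (int t) (-1)"
    using crossG[OF sg ori p _ _ rotG reflG] by blast
  have v0: "fG G (nbr rot m p x y 0) = G (int x + 1) (int y)"
  proof (cases "x + 1 < m")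
    case True then show ?thesis by (simp add: nbr_def fG_def add.commute)
  next
    case False
    then have "int x + 1 = int m" using x by simp
    then show ?thesis using False cG[of 1 y] y rd(1)[of "int y"] by (simp add: nbr_def)
  qed
  have v1: "fG G (nbr rot m p x y 1) = G (int x) (int y + 1)"
  proof (cases "y + 1 < m")
    case True then show ?thesis by (simp add: nbr_def fG_def add.commute)
  next
    case False
    then have "int y + 1 = int m" using y by simp
    then show ?thesis using False cG[of 2 "m - 1 - x"] x rd(2)[of "int x"] by (simp add: nbr_def of_nat_diff algebra_simps)
  qed
  have v2: "fG G (nbr rot m p x y 2) = G (int x - 1) (int y)"
  proof (cases "0 < x")
    case True then show ?thesis by (simp add: nbr_def fG_def of_nat_diff)
  next
    case False
    then have "int x - 1 = -1" by simp
    then show ?thesis using False cG[of 3 "m - 1 - y"] y rd(3)[of "int y"] by (simp add: nbr_def of_nat_diff algebra_simps)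
  qed
  have v3: "fG G (nbr rot m p x y 3) = G (int x) (int y - 1)"
  proof (cases "0 < y")
    case True then show ?thesis by (simp add: nbr_def fG_def of_nat_diff)
  next
    case False
    then have "int y - 1 = -1" by simp
    then show ?thesis using False cG[of 0 x] x by (simp add: nbr_def)
  qed
  have "(\<Sum>d<4. fG G (nbr rot m p x y d)) = fG G (nbr rot m p x y 0) + fG G (nbr rot m p x y 1)
      + fG G (nbr rot m p x y 2) + fG G (nbr rot m p x y 3)"
    by (simp add: eval_nat_numeral)
  then show ?thesis using v0 v1 v2 v3 by simp
qed

lemma GC_eigen:
  assumes sg: "simple_graph V E" and ori: "orientation4 V E rot"
    and rotG: "\<forall>x y. G (int m - 1 - y) x = G x y" and reflG: "\<forall>t. G t (-1) = G (int m - 1 - t) 0"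
    and harm: "\<forall>x y. G (x+1) y + G (x-1) y + G x (y+1) + G x (y-1) = 0"
    and u: "u \<in> GC_verts V m"
  shows "laplacian (GC_verts V m) (GC_adj V rot m) (fG G) u = 4 * fG G u"
proof -
  obtain p x y where u': "u = (p,x,y)" by (cases u) auto
  have p: "p \<in> V" and x: "x < m" and y: "y < m" using u unfolding u' GC_verts_def by auto
  have N: "nbhd (GC_verts V m) (GC_adj V rot m) u = nbr rot m p x y ` {..<4}"
    using nbr_in[OF sg ori p x y] nbr_cover[OF sg ori p x y] unfolding u' by blast
  have inj: "inj_on (nbr rot m p x y) {..<4}" by (rule nbr_inj[OF sg ori p x y])
  have c: "card (nbhd (GC_verts V m) (GC_adj V rot m) u) = 4"
    unfolding N using card_image[OF inj] by simp
  have s: "(\<Sum>q\<in>nbhd (GC_verts V m) (GC_adj V rot m) u. fG G q) = 0"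
    unfolding N sum.reindex[OF inj] comp_def nbr_sum[OF sg ori p x y rotG reflG]
    using harm[rule_format, of "int x" "int y"] by (simp add: algebra_simps)
  show ?thesis unfolding laplacian_def c s by simp
qed

lemma n_eq: "k \<ge> 2 \<Longrightarrow> nat \<lceil>(real k - 1) / 2\<rceil> = k div 2"
proof -
  assume k: "k \<ge> 2"
  have "\<lceil>(real k - 1) / 2\<rceil> = int (k div 2)"
  proof (subst ceiling_eq_iff, intro conjI)
    have "real (2 * (k div 2)) \<ge> real k - 1" by (cases "even k") (auto, linarith?)
    then show "(real k - 1) / 2 \<le> real_of_int (int (k div 2))" by simp
    have "real (2 * (k div 2)) \<le> real k" by simp
    then show "real_of_int (int (k div 2)) - 1 < (real k - 1) / 2" by simp
  qed
  then show ?thesis by simp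
qed

lemma F_val:
  assumes k: "k \<ge> 2" and i: "i < k div 2" and i0: "i0 < k div 2"
  shows "fG (Gf (Ac (int (2*k)) (2 * int i))) (p, 2 * i0, 0) = (if i = i0 then -1 else 0)"
proof -
  define A where "A = Ac (int (2*k)) (2 * int i)"
  have props: "\<forall>s. A (s + int (2*k)) = A s" "\<forall>s. A (-2 - s) = - A s" "\<forall>s. odd s \<longrightarrow> A s = 0"
    unfolding A_def using Ac_props[of "int (2*k)" "2 * int i"] i k by auto
  have "A (2 * int i0 - 0 - 1) = 0" using props(3) by simp
  then have "fG (Gf A) (p, 2 * i0, 0) = A (2 * int i0)" by (simp add: fG_def Gf_def sgn1_def)
  also have "\<dots> = (if i = i0 then -1 else 0)"
  proof -
    have lt: "2 * int i0 < int (2*k)" "0 \<le> 2 * int i0" using i0 by auto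
    then have "(2 * int i0) mod int (2*k) = 2 * int i0" by simp
    moreover have "2 * int i0 \<noteq> int (2*k) - 2 - 2 * int i" using i i0 k by auto
    ultimately show ?thesis unfolding A_def Ac_def by auto
  qed
  finally show ?thesis unfolding A_def .
qed

theorem theorem1p5:
  fixes V :: "'a set" and E :: "'a \<Rightarrow> 'a \<Rightarrow> bool" and rot :: "'a \<Rightarrow> nat \<Rightarrow> 'a" and k :: nat
  assumes "finite V"
    and "simple_graph V E"
    and "graph_connected V E"
    and "\<forall>p\<in>V. card (nbhd V E p) = 4"
    and "orientation4 V E rot"
    and "k \<ge> 2"
  shows "laplacian_eigenvalue_mult_ge (GC_verts V (2 * k)) (GC_adj V rot (2 * k)) 4
           (nat \<lceil>(real k - 1) / 2\<rceil>)"
proof -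
  note sg = assms(2) and ori = assms(5) and k = assms(6)
  have n: "nat \<lceil>(real k - 1) / 2\<rceil> = k div 2" using n_eq[OF k] .
  define F where "F = (\<lambda>i::nat. fG (Gf (Ac (int (2*k)) (2 * int i))) :: 'a \<times> nat \<times> nat \<Rightarrow> complex)"
  have eig: "\<forall>i<k div 2. \<forall>u\<in>GC_verts V (2*k). laplacian (GC_verts V (2*k)) (GC_adj V rot (2*k)) (F i) u = 4 * F i u"
  proof (intro allI impI ballI)
    fix i u assume i: "i < k div 2" and u: "u \<in> GC_verts V (2*k)"
    define A where "A = Ac (int (2*k)) (2 * int i)"
    have props: "\<forall>s. A (s + int (2*k)) = A s" "\<forall>s. A (-2 - s) = - A s" "\<forall>s. odd s \<longrightarrow> A s = 0"
      unfolding A_def using Ac_props[of "int (2*k)" "2 * int i"] i k by auto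
    have ev: "even (int (2*k))" by simp
    have rotG: "\<forall>x y. Gf A (int (2*k) - 1 - y) x = Gf A x y"
      using Gf_rot[OF ev props] by blast
    have reflG: "\<forall>t. Gf A t (-1) = Gf A (int (2*k) - 1 - t) 0"
      using Gf_refl[OF ev props(1,2)] by blast
    have harm: "\<forall>x y. Gf A (x+1) y + Gf A (x-1) y + Gf A x (y+1) + Gf A x (y-1) = 0"
      using Gf_harm by blast
    show "laplacian (GC_verts V (2*k)) (GC_adj V rot (2*k)) (F i) u = 4 * F i u"
      unfolding F_def A_def[symmetric] by (rule GC_eigen[OF sg ori rotG reflG harm u])
  qed
  have indep: "\<forall>c :: nat \<Rightarrow> complex. (\<forall>u\<in>GC_verts V (2*k). (\<Sum>i<k div 2. c i * F i u) = 0) \<longrightarrow> (\<forall>i<k div 2. c i = 0)"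
  proof (intro allI impI)
    fix c :: "nat \<Rightarrow> complex" and i0
    assume h: "\<forall>u\<in>GC_verts V (2*k). (\<Sum>i<k div 2. c i * F i u) = 0" and i0: "i0 < k div 2"
    obtain p where p: "p \<in> V" using assms(3) unfolding graph_connected_def by blast
    have "(p, 2 * i0, 0) \<in> GC_verts V (2*k)" using p i0 k by (auto simp: GC_verts_def)
    then have "(\<Sum>i<k div 2. c i * F i (p, 2 * i0, 0)) = 0" using h by blast
    have fv: "F i (p, 2*i0, 0) = (if i = i0 then -1 else 0)" if ii: "i < k div 2" for i
      unfolding F_def by (rule F_val[OF k ii i0])
    have "(\<Sum>i<k div 2. c i * F i (p, 2 * i0, 0)) = (\<Sum>i<k div 2. (if i0 = i then - c i0 else 0))"
    proof (rule sum.cong[OF refl])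
      fix i assume "i \<in> {..<k div 2}"
      then have ii: "i < k div 2" by simp
      show "c i * F i (p, 2 * i0, 0) = (if i0 = i then - c i0 else 0)"
        unfolding fv[OF ii] by (cases "i = i0") simp_all
    qed
    also have "\<dots> = - c i0" using i0 by simp
    finally show "c i0 = 0" using \<open>(\<Sum>i<k div 2. c i * F i (p, 2 * i0, 0)) = 0\<close> by simp
  qed
  show ?thesis unfolding n laplacian_eigenvalue_mult_ge_def using eig indep by blast
qed

end
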